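(* If a hyperideal $I$ of $R$ is 1-absorbing prime but not prime, then $R$ is a local multiplicative hyperring.
   Context: Throughout, $R$ is a commutative multiplicative hyperring: $(R,+)$ is an abelian group and $\circ:R\times R\to P^*(R)$ is a commutative, associative hyperoperation with $a\circ(b+c)\subseteq a\circ b+a\circ c$ and $a\circ(-b)=(-a)\circ b=-(a\circ b)$; $A\circ B=\bigcup_{a\in A,b\in B}a\circ b$. $R$ has an identity $1$ ($a\in a\circ1$); $x$ is a unit if $1\in x\circ y$ for some $y$. Hyperideals are nonempty subsets closed under subtraction and absorbing $r\circ a\subseteq I$; all are assumed $\mathbf{C}$-hyperideals (for every finite product $A=r_1\circ\cdots\circ r_n$, $A\cap I\ne\emptyset$ implies $A\subseteq I$). Prime hyperideal: proper $P$ with $x\circ y\subseteq P\Rightarrow x\in P$ or $y\in P$. 1-absorbing prime hyperideal: proper $I$ such that for all nonunit $x,y,z$, $x\circ y\circ z\subseteq I$ implies $x\circ y\subseteq I$ or $z\in I$. $R$ is local if it has a unique maximal hyperideal. *)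

theory Defs
  imports Main
begin

text \<open>A commutative multiplicative hyperring: the additive abelian group is the
  whole type 'a (class ab_group_add); the hyperoperation is mul :: 'a => 'a => 'a set.\<close>

definition setmul :: "('a \<Rightarrow> 'a \<Rightarrow> 'a set) \<Rightarrow> 'a set \<Rightarrow> 'a set \<Rightarrow> 'a set" where
  "setmul mul A B = (\<Union>a\<in>A. \<Union>b\<in>B. mul a b)"

definition setsum_add :: "'a::ab_group_add set \<Rightarrow> 'a set \<Rightarrow> 'a set" where
  "setsum_add A B = {x + y | x y. x \<in> A \<and> y \<in> B}"

definition comm_mult_hyperring :: "('a::ab_group_add \<Rightarrow> 'a \<Rightarrow> 'a set) \<Rightarrow> bool" where
  "comm_mult_hyperring mul \<longleftrightarrow>
     (\<forall>a b. mul a b \<noteq> {}) \<and>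
     (\<forall>a b. mul a b = mul b a) \<and>
     (\<forall>a b c. setmul mul (mul a b) {c} = setmul mul {a} (mul b c)) \<and>
     (\<forall>a b c. mul a (b + c) \<subseteq> setsum_add (mul a b) (mul a c)) \<and>
     (\<forall>a b. mul a (- b) = uminus ` (mul a b) \<and> mul (- a) b = uminus ` (mul a b))"

definition has_identity :: "('a \<Rightarrow> 'a \<Rightarrow> 'a set) \<Rightarrow> 'a \<Rightarrow> bool" where
  "has_identity mul one \<longleftrightarrow> (\<forall>a. a \<in> mul a one)"

definition hunit :: "('a \<Rightarrow> 'a \<Rightarrow> 'a set) \<Rightarrow> 'a \<Rightarrow> 'a \<Rightarrow> bool" where
  "hunit mul one x \<longleftrightarrow> (\<exists>y. one \<in> mul x y)"

fun hprod :: "('a \<Rightarrow> 'a \<Rightarrow> 'a set) \<Rightarrow> 'a list \<Rightarrow> 'a set" where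
  "hprod mul [] = {}"
| "hprod mul [r] = {r}"
| "hprod mul (r # rs) = setmul mul {r} (hprod mul rs)"

definition hyperideal :: "('a::ab_group_add \<Rightarrow> 'a \<Rightarrow> 'a set) \<Rightarrow> 'a set \<Rightarrow> bool" where
  "hyperideal mul I \<longleftrightarrow> I \<noteq> {} \<and> (\<forall>a\<in>I. \<forall>b\<in>I. a - b \<in> I) \<and>
     (\<forall>r. \<forall>a\<in>I. mul r a \<subseteq> I)"

definition C_hyperideal :: "('a \<Rightarrow> 'a \<Rightarrow> 'a set) \<Rightarrow> 'a set \<Rightarrow> bool" where
  "C_hyperideal mul I \<longleftrightarrow> (\<forall>rs. rs \<noteq> [] \<longrightarrow> hprod mul rs \<inter> I \<noteq> {} \<longrightarrow> hprod mul rs \<subseteq> I)"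

definition prime_hyperideal :: "('a::ab_group_add \<Rightarrow> 'a \<Rightarrow> 'a set) \<Rightarrow> 'a set \<Rightarrow> bool" where
  "prime_hyperideal mul P \<longleftrightarrow> hyperideal mul P \<and> P \<noteq> UNIV \<and>
     (\<forall>x y. mul x y \<subseteq> P \<longrightarrow> x \<in> P \<or> y \<in> P)"

definition one_absorbing_prime :: "('a::ab_group_add \<Rightarrow> 'a \<Rightarrow> 'a set) \<Rightarrow> 'a \<Rightarrow> 'a set \<Rightarrow> bool" where
  "one_absorbing_prime mul one I \<longleftrightarrow> hyperideal mul I \<and> I \<noteq> UNIV \<and>
     (\<forall>x y z. \<not> hunit mul one x \<longrightarrow> \<not> hunit mul one y \<longrightarrow> \<not> hunit mul one z \<longrightarrow>
        setmul mul (mul x y) {z} \<subseteq> I \<longrightarrow> mul x y \<subseteq> I \<or> z \<in> I)"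

definition maximal_hyperideal :: "('a::ab_group_add \<Rightarrow> 'a \<Rightarrow> 'a set) \<Rightarrow> 'a set \<Rightarrow> bool" where
  "maximal_hyperideal mul M \<longleftrightarrow> hyperideal mul M \<and> M \<noteq> UNIV \<and>
     (\<forall>J. hyperideal mul J \<longrightarrow> M \<subseteq> J \<longrightarrow> J = M \<or> J = UNIV)"

definition local_hyperring :: "('a::ab_group_add \<Rightarrow> 'a \<Rightarrow> 'a set) \<Rightarrow> bool" where
  "local_hyperring mul \<longleftrightarrow> (\<exists>!M. maximal_hyperideal mul M)"

end

theory Submission
  imports Defs
begin

lemma cmh_parts:
  assumes "comm_mult_hyperring mul"
  shows "\<And>a b. mul a b = mul b a"
    and "\<And>a b c. setmul mul (mul a b) {c} = setmul mul {a} (mul b c)"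
    and "\<And>a b c. mul a (b + c) \<subseteq> setsum_add (mul a b) (mul a c)"
    and "\<And>a b. mul (- a) b = mul a (- b)"
proof -
  note h = assms[unfolded comm_mult_hyperring_def]
  show "\<And>a b. mul a b = mul b a" by (rule h[THEN conjunct2, THEN conjunct1, rule_format])
  show "\<And>a b c. setmul mul (mul a b) {c} = setmul mul {a} (mul b c)"
    by (rule h[THEN conjunct2, THEN conjunct2, THEN conjunct1, rule_format])
  show "\<And>a b c. mul a (b + c) \<subseteq> setsum_add (mul a b) (mul a c)"
    by (rule h[THEN conjunct2, THEN conjunct2, THEN conjunct2, THEN conjunct1, rule_format])
  fix a b
  have "mul a (- b) = uminus ` (mul a b)" "mul (- a) b = uminus ` (mul a b)"
    using h[THEN conjunct2, THEN conjunct2, THEN conjunct2, THEN conjunct2, rule_format, of a b] by auto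
  thus "mul (- a) b = mul a (- b)" by simp
qed

lemma hi_add:
  assumes "hyperideal mul I" "a \<in> I" "b \<in> I" shows "a + b \<in> I"
proof -
  have d: "\<forall>a\<in>I. \<forall>b\<in>I. a - b \<in> I" using assms(1) unfolding hyperideal_def by blast
  have "0 \<in> I" using d assms(2) by (metis diff_self)
  hence "- b \<in> I" using d assms(3) by (metis diff_0)
  thus ?thesis using d assms(2) by (metis diff_minus_eq_add)
qed

lemma hi_abs:
  assumes "hyperideal mul I" "t \<in> I" shows "mul r t \<subseteq> I"
  using assms unfolding hyperideal_def by blast

lemma key:
  assumes H: "comm_mult_hyperring mul" and one: "has_identity mul one"
    and I: "hyperideal mul I" and zv: "mul z v \<subseteq> I" and vw: "one \<in> mul v w"
  shows "z \<in> I"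
proof -
  have "z \<in> mul z one" using one unfolding has_identity_def by blast
  also have "\<dots> \<subseteq> setmul mul {z} (mul v w)" using vw unfolding setmul_def by blast
  also have "\<dots> = setmul mul (mul z v) {w}" using cmh_parts(2)[OF H] by metis
  also have "\<dots> \<subseteq> I"
  proof
    fix e assume "e \<in> setmul mul (mul z v) {w}"
    then obtain s where s: "s \<in> mul z v" "e \<in> mul s w" unfolding setmul_def by blast
    have "mul s w = mul w s" using cmh_parts(1)[OF H] by metis
    thus "e \<in> I" using hi_abs[OF I] s zv by blast
  qed
  finally show ?thesis .
qed

lemma unit_univ:
  assumes H: "comm_mult_hyperring mul" and one: "has_identity mul one"
    and J: "hyperideal mul J" and a: "a \<in> J" and u: "hunit mul one a"
  shows "J = UNIV"
proof -
  obtain y where y: "one \<in> mul a y" using u unfolding hunit_def by blast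
  have "mul a y = mul y a" using cmh_parts(1)[OF H] by metis
  hence "one \<in> J" using hi_abs[OF J a] y by blast
  have "r \<in> J" for r
  proof -
    have "r \<in> mul r one" using one unfolding has_identity_def by blast
    thus ?thesis using hi_abs[OF J \<open>one \<in> J\<close>] by blast
  qed
  thus ?thesis by blast
qed

theorem mainTheorem3:
  fixes mul :: "'a::ab_group_add \<Rightarrow> 'a \<Rightarrow> 'a set" and one :: 'a and I :: "'a set"
  assumes "comm_mult_hyperring mul"
    and "has_identity mul one"
    and "\<And>J. hyperideal mul J \<Longrightarrow> C_hyperideal mul J"
    and "hyperideal mul I"
    and "one_absorbing_prime mul one I"
    and "\<not> prime_hyperideal mul I"
  shows "local_hyperring mul"
proof -
  note H = assms(1) and one = assms(2) and I = assms(4)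
  have comm: "\<And>a b. mul a b = mul b a" by (rule cmh_parts(1)[OF H])
  have assoc: "\<And>a b c. setmul mul (mul a b) {c} = setmul mul {a} (mul b c)"
    by (rule cmh_parts(2)[OF H])
  have dist: "\<And>a b c. mul a (b + c) \<subseteq> setsum_add (mul a b) (mul a c)"
    by (rule cmh_parts(3)[OF H])
  have neg: "\<And>a b. mul (- a) b = mul a (- b)"
    by (rule cmh_parts(4)[OF H])
  have Iprop: "I \<noteq> UNIV" and abs1: "\<And>x y z. \<not> hunit mul one x \<Longrightarrow> \<not> hunit mul one y \<Longrightarrow> \<not> hunit mul one z \<Longrightarrow>
        setmul mul (mul x y) {z} \<subseteq> I \<Longrightarrow> mul x y \<subseteq> I \<or> z \<in> I"
    using assms(5) unfolding one_absorbing_prime_def by blast+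
  obtain x y where xy: "mul x y \<subseteq> I" "x \<notin> I" "y \<notin> I"
    using assms(6) I Iprop unfolding prime_hyperideal_def by blast
  have xn: "\<not> hunit mul one x"
  proof
    assume "hunit mul one x" then obtain u where "one \<in> mul x u" unfolding hunit_def by blast
    moreover have "mul y x \<subseteq> I" using xy(1) comm[of y x] by simp
    ultimately show False using key[OF H one I, of y x u] xy(3) by blast
  qed
  have yn: "\<not> hunit mul one y"
  proof
    assume "hunit mul one y" then obtain u where "one \<in> mul y u" unfolding hunit_def by blast
    thus False using key[OF H one I xy(1), of u] xy(2) by blast
  qed
  define N where "N = {a. \<not> hunit mul one a}"
  have ax: "mul a x \<subseteq> I" if "a \<in> N" for a
  proof -
    have "setmul mul (mul a x) {y} \<subseteq> I"
      unfolding assoc unfolding setmul_def using hi_abs[OF I] xy(1) by blast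
    thus ?thesis using abs1[of a x y] that xn yn xy N_def by blast
  qed
  have oneU: "hunit mul one one" using one unfolding hunit_def has_identity_def by blast
  have Nadd: "a + b \<in> N" if "a \<in> N" "b \<in> N" for a b
  proof (rule ccontr)
    assume "a + b \<notin> N"
    then obtain w where w: "one \<in> mul (a+b) w" unfolding N_def hunit_def by blast
    have "mul x (a+b) \<subseteq> I"
    proof
      fix e assume "e \<in> mul x (a+b)"
      then obtain p q where "p \<in> mul x a" "q \<in> mul x b" "e = p + q"
        using dist unfolding setsum_add_def by blast
      thus "e \<in> I" using ax that comm hi_add[OF I] by blast
    qed
    thus False using key[OF H one I _ w] xy(2) by blast
  qed
  have Nneg: "- a \<in> N" if "a \<in> N" for a
  proof (rule ccontr)
    assume "- a \<notin> N"
    then obtain w where "one \<in> mul (- a) w" unfolding N_def hunit_def by blast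
    hence "one \<in> mul a (- w)" using neg by simp
    thus False using that unfolding N_def hunit_def by blast
  qed
  have Nmul: "mul r a \<subseteq> N" if "a \<in> N" for r a
  proof
    fix c assume c: "c \<in> mul r a"
    show "c \<in> N"
    proof (rule ccontr)
      assume "c \<notin> N"
      then obtain w where w: "one \<in> mul c w" unfolding N_def hunit_def by blast
      have "c \<in> mul a r" using c comm by blast
      hence "one \<in> setmul mul (mul a r) {w}" using w unfolding setmul_def by blast
      hence "one \<in> setmul mul {a} (mul r w)" using assoc by metis
      then obtain t where "one \<in> mul a t" unfolding setmul_def by blast
      thus False using that unfolding N_def hunit_def by blast
    qed
  qed
  have NH: "hyperideal mul N" unfolding hyperideal_def
  proof (intro conjI ballI allI)
    show "N \<noteq> {}" using xn N_def by blast
    fix a b assume "a \<in> N" "b \<in> N" hence "a + - b \<in> N" using Nadd Nneg by blast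
    thus "a - b \<in> N" by simp
  next
    fix r a assume "a \<in> N" thus "mul r a \<subseteq> N" using Nmul by blast
  qed
  have NP: "N \<noteq> UNIV" using oneU N_def by blast
  have sub: "J \<subseteq> N" if "hyperideal mul J" "J \<noteq> UNIV" for J
    using unit_univ[OF H one that(1)] that(2) unfolding N_def by blast
  have NM: "maximal_hyperideal mul N"
    unfolding maximal_hyperideal_def using NH NP sub by blast
  show ?thesis unfolding local_hyperring_def
  proof (rule ex1I[of _ N])
    show "maximal_hyperideal mul N" by (rule NM)
    fix M assume "maximal_hyperideal mul M"
    hence "hyperideal mul M" "M \<noteq> UNIV" "\<And>J. hyperideal mul J \<Longrightarrow> M \<subseteq> J \<Longrightarrow> J = M \<or> J = UNIV"
      unfolding maximal_hyperideal_def by blast+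
    thus "M = N" using sub NH NP by blast
  qed
qed

end
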